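(* Let $K\ge1$, $T\ge1$, $\ell_1,\dots,\ell_T\in[0,1]^K$, $\phi>1$, $\alpha>0$, and suppose the cumulative loss of FlipFlop with parameters $\phi,\alpha$ satisfies $H^{\mathrm{ff}}_T\ge L^*_T$. Then \[ \underline{V}_T\le\frac{L^*_T(T-L^*_T)}{T}+\Big(\frac{\phi}{\phi-1}+\frac{\phi}{\alpha}+2\Big)\underline{\Delta}_T+\frac{\phi}{\alpha}. \]
   Context: Hedge setting: $K$ experts; in round $t$ the learner chooses a probability vector $w_t$, then $\ell_t$ is revealed and the learner suffers $h_t=\sum_kw_{t,k}\ell_{t,k}$. Write $L_{t,k}=\sum_{s=1}^t\ell_{s,k}$ ($L_{0,k}=0$), $L^*_t=\min_kL_{t,k}$, $H_T=\sum_{t\le T}h_t$. Exponential weights with learning rate $\eta\in(0,\infty]$ at time $t$: $w_{t,k}=e^{-\eta L_{t-1,k}}/\sum_je^{-\eta L_{t-1,j}}$ if $\eta<\infty$; for $\eta=\infty$, $w_t$ uniform on $\{k:L_{t-1,k}=L^*_{t-1}\}$. With learning rate $\eta_t$ in round $t$: mix loss $m_t=-\frac1{\eta_t}\ln\sum_kw_{t,k}e^{-\eta_t\ell_{t,k}}$ if $\eta_t<\infty$, $m_t=L^*_t-L^*_{t-1}$ if $\eta_t=\infty$; mixability gap $\delta_t=h_t-m_t$; loss variance $v_t=\sum_kw_{t,k}(\ell_{t,k}-h_t)^2$. FlipFlop with parameters $\phi>1,\alpha>0$: keeps accumulators $\overline{\Delta}$ (flip) and $\underline{\Delta}$ (flop),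 both initially $0$, starting in the flip regime. In round $t$: flip regime uses $\eta_t=\infty$; flop regime uses $\eta_t=\ln K/\underline{\Delta}_{t-1}$ ($=\infty$ if $\underline{\Delta}_{t-1}=0$); weights are exponential weights with learning rate $\eta_t$ from $L_{t-1}$. After round $t$, $\delta_t$ is added to the current regime's accumulator. If in flip and $\overline{\Delta}_t>(\phi/\alpha)\underline{\Delta}_t$, switch to flop for round $t+1$; if in flop and $\underline{\Delta}_t>\alpha\overline{\Delta}_t$, switch to flip for round $t+1$. $H^{\mathrm{ff}}_T$ is FlipFlop's cumulative loss, $\underline{\Delta}_T$ the sum of $\delta_t$ over flop rounds $t\le T$, and $\underline{V}_T$ the sum of $v_t$ over flop rounds $t\le T$. *)

theory Defs
  imports Complex_Main "HOL-Library.Extended_Real"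
begin

text \<open>Experts are indexed by k < K, rounds by t = 1..T; loss of expert k in round t is l t k.
  Learning rates are extended reals; PInfty stands for the learning rate infinity.\<close>

definition cumL :: "(nat \<Rightarrow> nat \<Rightarrow> real) \<Rightarrow> nat \<Rightarrow> nat \<Rightarrow> real" where
  "cumL l t k = (\<Sum>s\<in>{1..t}. l s k)"

definition Lstar :: "(nat \<Rightarrow> nat \<Rightarrow> real) \<Rightarrow> nat \<Rightarrow> nat \<Rightarrow> real" where
  "Lstar l K t = Min ((\<lambda>k. cumL l t k) ` {..<K})"

definition ew :: "nat \<Rightarrow> ereal \<Rightarrow> (nat \<Rightarrow> real) \<Rightarrow> nat \<Rightarrow> real" where
  "ew K eta L k =
     (if eta = PInfty then
        (if L k = Min (L ` {..<K}) then 1 / real (card {j\<in>{..<K}. L j = Min (L ` {..<K})}) else 0)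
      else exp (- real_of_ereal eta * L k) / (\<Sum>j<K. exp (- real_of_ereal eta * L j)))"

definition wt :: "(nat \<Rightarrow> nat \<Rightarrow> real) \<Rightarrow> nat \<Rightarrow> ereal \<Rightarrow> nat \<Rightarrow> nat \<Rightarrow> real" where
  "wt l K eta t k = ew K eta (cumL l (t - 1)) k"

definition hedge_loss :: "(nat \<Rightarrow> nat \<Rightarrow> real) \<Rightarrow> nat \<Rightarrow> ereal \<Rightarrow> nat \<Rightarrow> real" where
  "hedge_loss l K eta t = (\<Sum>k<K. wt l K eta t k * l t k)"

definition mix_loss :: "(nat \<Rightarrow> nat \<Rightarrow> real) \<Rightarrow> nat \<Rightarrow> ereal \<Rightarrow> nat \<Rightarrow> real" where
  "mix_loss l K eta t =
     (if eta = PInfty then Lstar l K t - Lstar l K (t - 1)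
      else - (1 / real_of_ereal eta) * ln (\<Sum>k<K. wt l K eta t k * exp (- real_of_ereal eta * l t k)))"

definition mix_gap :: "(nat \<Rightarrow> nat \<Rightarrow> real) \<Rightarrow> nat \<Rightarrow> ereal \<Rightarrow> nat \<Rightarrow> real" where
  "mix_gap l K eta t = hedge_loss l K eta t - mix_loss l K eta t"

definition loss_var :: "(nat \<Rightarrow> nat \<Rightarrow> real) \<Rightarrow> nat \<Rightarrow> ereal \<Rightarrow> nat \<Rightarrow> real" where
  "loss_var l K eta t = (\<Sum>k<K. wt l K eta t k * (l t k - hedge_loss l K eta t)\<^sup>2)"

text \<open>Learning rate of FlipFlop given its state (in_flop, Delta_flip, Delta_flop) before the round.\<close>
definition ff_rate :: "nat \<Rightarrow> bool \<times> real \<times> real \<Rightarrow> ereal" where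
  "ff_rate K st = (case st of (flop, dF, dL) \<Rightarrow>
       (if flop \<and> dL \<noteq> 0 then ereal (ln (real K) / dL) else PInfty))"

text \<open>State after round t: (regime for round t+1 is flop?, flip accumulator, flop accumulator).\<close>
primrec ff_state :: "(nat \<Rightarrow> nat \<Rightarrow> real) \<Rightarrow> nat \<Rightarrow> real \<Rightarrow> real \<Rightarrow> nat \<Rightarrow> bool \<times> real \<times> real" where
  "ff_state l K phi alpha 0 = (False, 0, 0)"
| "ff_state l K phi alpha (Suc t) =
     (case ff_state l K phi alpha t of (flop, dF, dL) \<Rightarrow>
        (let eta = ff_rate K (flop, dF, dL);
             d = mix_gap l K eta (Suc t);
             dF' = (if flop then dF else dF + d);
             dL' = (if flop then dL + d else dL);
             flop' = (if flop then \<not> (dL' > alpha * dF') else dF' > (phi / alpha) * dL')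
         in (flop', dF', dL')))"

definition ff_in_flop :: "(nat \<Rightarrow> nat \<Rightarrow> real) \<Rightarrow> nat \<Rightarrow> real \<Rightarrow> real \<Rightarrow> nat \<Rightarrow> bool" where
  "ff_in_flop l K phi alpha t = fst (ff_state l K phi alpha (t - 1))"

definition ff_eta :: "(nat \<Rightarrow> nat \<Rightarrow> real) \<Rightarrow> nat \<Rightarrow> real \<Rightarrow> real \<Rightarrow> nat \<Rightarrow> ereal" where
  "ff_eta l K phi alpha t = ff_rate K (ff_state l K phi alpha (t - 1))"

definition ff_loss :: "(nat \<Rightarrow> nat \<Rightarrow> real) \<Rightarrow> nat \<Rightarrow> real \<Rightarrow> real \<Rightarrow> nat \<Rightarrow> real" where
  "ff_loss l K phi alpha T = (\<Sum>t\<in>{1..T}. hedge_loss l K (ff_eta l K phi alpha t) t)"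

definition ff_Dflop :: "(nat \<Rightarrow> nat \<Rightarrow> real) \<Rightarrow> nat \<Rightarrow> real \<Rightarrow> real \<Rightarrow> nat \<Rightarrow> real" where
  "ff_Dflop l K phi alpha T =
     (\<Sum>t\<in>{t\<in>{1..T}. ff_in_flop l K phi alpha t}. mix_gap l K (ff_eta l K phi alpha t) t)"

definition ff_Vflop :: "(nat \<Rightarrow> nat \<Rightarrow> real) \<Rightarrow> nat \<Rightarrow> real \<Rightarrow> real \<Rightarrow> nat \<Rightarrow> real" where
  "ff_Vflop l K phi alpha T =
     (\<Sum>t\<in>{t\<in>{1..T}. ff_in_flop l K phi alpha t}. loss_var l K (ff_eta l K phi alpha t) t)"

end

theory Submission
  imports Defs "HOL-Analysis.Convex"
begin


lemma cumL_0[simp]: "cumL l 0 k = 0" by (simp add: cumL_def)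
lemma cumL_Suc: "cumL l (Suc t) k = cumL l t k + l (Suc t) k"
  by (simp add: cumL_def)

lemma Lstar_le: "k < K \<Longrightarrow> Lstar l K t \<le> cumL l t k"
  unfolding Lstar_def by (rule Min_le) auto
lemma Lstar_ex: "K \<ge> 1 \<Longrightarrow> \<exists>k<K. Lstar l K t = cumL l t k"
proof -
  assume "K \<ge> 1"
  then have "Lstar l K t \<in> (\<lambda>k. cumL l t k) ` {..<K}" unfolding Lstar_def
    by (intro Min_in) (auto simp: lessThan_empty_iff)
  then show ?thesis by auto
qed
lemma Lstar_0: "K \<ge> 1 \<Longrightarrow> Lstar l K 0 = 0"
  using Lstar_ex[of K l 0] by auto

lemma ew_nonneg: "ew K eta L k \<ge> 0"
  unfolding ew_def by (auto intro!: divide_nonneg_nonneg sum_nonneg)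

lemma ew_sum: assumes "K \<ge> 1" shows "(\<Sum>k<K. ew K eta L k) = 1"
proof (cases "eta = PInfty")
  case True
  define m where "m = Min (L ` {..<K})"
  define A where "A = {j\<in>{..<K}. L j = m}"
  have "m \<in> L ` {..<K}" unfolding m_def using assms by (intro Min_in) (auto simp: lessThan_empty_iff)
  then have "A \<noteq> {}" unfolding A_def by auto
  moreover have fA: "finite A" unfolding A_def by auto
  ultimately have c: "card A > 0" by auto
  have "(\<Sum>k<K. ew K eta L k) = (\<Sum>k<K. if k \<in> A then 1 / real (card A) else 0)"
    unfolding ew_def using True by (intro sum.cong) (auto simp: A_def m_def)
  also have "\<dots> = (\<Sum>k\<in>A. 1 / real (card A))"
    by (subst sum.If_cases) (auto simp: A_def Int_def)
  also have "\<dots> = 1" using c by simp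
  finally show ?thesis .
next
  case False
  have p: "(\<Sum>j<K. exp (- real_of_ereal eta * L j)) > 0" using assms by (intro sum_pos) (auto simp: lessThan_empty_iff)
  have "(\<Sum>k<K. ew K eta L k) = (\<Sum>k<K. exp (- real_of_ereal eta * L k)) / (\<Sum>j<K. exp (- real_of_ereal eta * L j))"
    unfolding ew_def using False by (simp flip: sum_divide_distrib)
  also have "\<dots> = 1" using p by simp
  finally show ?thesis .
qed



lemma wsum_bounds:
  fixes w x :: "nat \<Rightarrow> real"
  assumes "\<And>k. k < K \<Longrightarrow> w k \<ge> 0" "(\<Sum>k<K. w k) = 1" "\<And>k. k < K \<Longrightarrow> 0 \<le> x k \<and> x k \<le> 1"
  shows "0 \<le> (\<Sum>k<K. w k * x k)" "(\<Sum>k<K. w k * x k) \<le> 1"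
    "(\<Sum>k<K. w k * (x k - (\<Sum>j<K. w j * x j))\<^sup>2) \<le> (\<Sum>k<K. w k * x k) * (1 - (\<Sum>k<K. w k * x k))"
proof -
  show "0 \<le> (\<Sum>k<K. w k * x k)" using assms by (intro sum_nonneg) auto
  have "(\<Sum>k<K. w k * x k) \<le> (\<Sum>k<K. w k)" using assms by (intro sum_mono) (auto intro: mult_left_le)
  then show "(\<Sum>k<K. w k * x k) \<le> 1" using assms by simp
  define h where "h = (\<Sum>j<K. w j * x j)"
  have "(\<Sum>k<K. w k * (x k - h)\<^sup>2) = (\<Sum>k<K. w k * (x k)\<^sup>2) - 2 * h * (\<Sum>k<K. w k * x k) + h\<^sup>2 * (\<Sum>k<K. w k)"
    by (simp add: power2_diff algebra_simps sum.distrib sum_subtractf sum_distrib_left sum_distrib_right)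
  also have "\<dots> = (\<Sum>k<K. w k * (x k)\<^sup>2) - h\<^sup>2" using assms(2) by (simp add: h_def power2_eq_square)
  also have "(\<Sum>k<K. w k * (x k)\<^sup>2) \<le> h" unfolding h_def using assms
    by (intro sum_mono) (auto intro!: mult_left_mono simp: power2_eq_square intro: mult_left_le)
  finally show "(\<Sum>k<K. w k * (x k - (\<Sum>j<K. w j * x j))\<^sup>2) \<le> (\<Sum>k<K. w k * x k) * (1 - (\<Sum>k<K. w k * x k))"
    by (simp add: h_def power2_eq_square algebra_simps)
qed

lemma jensen_exp:
  fixes w x :: "nat \<Rightarrow> real"
  assumes "\<And>k. k < K \<Longrightarrow> w k \<ge> 0" "(\<Sum>k<K. w k) = 1"
  shows "exp (\<Sum>k<K. w k * x k) \<le> (\<Sum>k<K. w k * exp (x k))"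
proof -
  define c where "c = (\<Sum>k<K. w k * x k)"
  have "(\<Sum>k<K. w k * (exp c * (1 + (x k - c)))) \<le> (\<Sum>k<K. w k * exp (x k))"
  proof (intro sum_mono mult_left_mono)
    fix k show "exp c * (1 + (x k - c)) \<le> exp (x k)"
      using exp_ge_add_one_self[of "x k - c"] by (simp add: exp_diff field_simps)
  qed (use assms in auto)
  moreover have "(\<Sum>k<K. w k * (exp c * (1 + (x k - c)))) = exp c * ((\<Sum>k<K. w k) + (\<Sum>k<K. w k * x k) - c * (\<Sum>k<K. w k))"
    by (simp add: algebra_simps sum.distrib sum_subtractf sum_distrib_left)
  ultimately show ?thesis using assms(2) by (simp add: c_def)
qed



definition Zs :: "(nat \<Rightarrow> nat \<Rightarrow> real) \<Rightarrow> nat \<Rightarrow> nat \<Rightarrow> real \<Rightarrow> real" where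
  "Zs l K t r = (\<Sum>k<K. exp (- r * cumL l t k))"
definition Mf :: "(nat \<Rightarrow> nat \<Rightarrow> real) \<Rightarrow> nat \<Rightarrow> nat \<Rightarrow> real \<Rightarrow> real" where
  "Mf l K t r = - (1 / r) * ln (Zs l K t r / real K)"
definition Gf :: "(nat \<Rightarrow> nat \<Rightarrow> real) \<Rightarrow> nat \<Rightarrow> nat \<Rightarrow> real \<Rightarrow> real" where
  "Gf l K t r = Mf l K t r - Lstar l K t"

lemma Zs_pos: "K \<ge> 1 \<Longrightarrow> Zs l K t r > 0"
  unfolding Zs_def by (intro sum_pos) (auto simp: lessThan_empty_iff)

lemma mix_eq:
  assumes "K \<ge> 1" "r > 0" "t \<ge> 1"
  shows "mix_loss l K (ereal r) t = Mf l K t r - Mf l K (t - 1) r"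
proof -
  obtain s where s: "t = Suc s" using assms(3) by (cases t) auto
  have "(\<Sum>k<K. wt l K (ereal r) t k * exp (- r * l t k))
      = (\<Sum>k<K. exp (- r * cumL l t k) / Zs l K s r)"
    unfolding wt_def ew_def Zs_def s
    by (intro sum.cong) (auto simp: cumL_Suc ring_distribs exp_diff exp_minus divide_inverse)
  also have "\<dots> = Zs l K t r / Zs l K s r" by (simp add: Zs_def sum_divide_distrib)
  finally have e: "(\<Sum>k<K. wt l K (ereal r) t k * exp (- r * l t k)) = Zs l K t r / Zs l K s r" .
  have "ln (Zs l K t r / Zs l K s r) = ln (Zs l K t r / real K) - ln (Zs l K s r / real K)"
    using Zs_pos[OF assms(1), of l t r] Zs_pos[OF assms(1), of l s r] assms(1) by (simp add: ln_div)
  then show ?thesis unfolding mix_loss_def Mf_def using e s assms(2)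
    by (simp add: field_simps)
qed

lemma Gf_nonneg:
  assumes "K \<ge> 1" "r > 0" shows "Gf l K t r \<ge> 0"
proof -
  have "Zs l K t r \<le> (\<Sum>k<K. exp (- r * Lstar l K t))"
    unfolding Zs_def using assms by (intro sum_mono) (auto intro: Lstar_le)
  then have "Zs l K t r / K \<le> exp (- r * Lstar l K t)" using assms by (simp add: field_simps)
  then have "ln (Zs l K t r / K) \<le> ln (exp (- r * Lstar l K t))"
    using Zs_pos[OF assms(1)] assms by (subst ln_le_cancel_iff) auto
  then have "ln (Zs l K t r / K) \<le> - r * Lstar l K t" by simp
  then show ?thesis unfolding Gf_def Mf_def using assms
    by (simp add: field_simps)
qed

lemma Gf_le:
  assumes "K \<ge> 1" "r > 0" shows "Gf l K t r \<le> ln K / r"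
proof -
  obtain k where k: "k < K" "Lstar l K t = cumL l t k" using Lstar_ex[OF assms(1)] by blast
  have "exp (- r * Lstar l K t) \<le> Zs l K t r"
    unfolding Zs_def k(2) using k(1) by (intro member_le_sum) auto
  then have "ln (exp (- r * Lstar l K t)) \<le> ln (Zs l K t r)"
    using Zs_pos[OF assms(1)] by (subst ln_le_cancel_iff) auto
  then have "- r * Lstar l K t - ln K \<le> ln (Zs l K t r / K)"
    using Zs_pos[OF assms(1), of l t r] assms by (simp add: ln_div)
  then have h: "- ln (Zs l K t r / K) \<le> ln K + r * Lstar l K t" by linarith
  have "- ln (Zs l K t r / K) / r \<le> (ln K + r * Lstar l K t) / r"
    using h assms by (intro divide_right_mono) auto
  then show ?thesis unfolding Gf_def Mf_def using assms
    by (simp add: add_divide_distrib)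
qed

lemma exp_convex_ineq:
  fixes p u :: real assumes "0 \<le> p" "p \<le> 1"
  shows "exp (p * u) \<le> p * exp u + (1 - p)"
  using convex_onD[OF exp_convex, of p 0 u] assms by simp

lemma Gf_mono:
  assumes "K \<ge> 1" "0 < r'" "r' \<le> r" shows "Gf l K t r \<le> Gf l K t r'"
proof -
  define p where "p = r' / r"
  have p: "0 < p" "p \<le> 1" using assms by (auto simp: p_def)
  define c where "c = ln (Zs l K t r / K)"
  have ec: "exp c = Zs l K t r / K" unfolding c_def using Zs_pos[OF assms(1)] assms(1) by simp
  have rr: "r' = p * r" using assms by (simp add: p_def)
  have "Zs l K t r' / K = (\<Sum>k<K. exp (p * (- r * cumL l t k))) / K"
    by (simp add: Zs_def rr algebra_simps)
  also have "\<dots> \<le> (\<Sum>k<K. exp (p * c) * (p * exp (- r * cumL l t k - c) + (1 - p))) / K"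
  proof (intro divide_right_mono sum_mono)
    fix k
    have "exp (p * (- r * cumL l t k)) = exp (p * c) * exp (p * (- r * cumL l t k - c))"
      by (simp add: algebra_simps flip: exp_add)
    also have "\<dots> \<le> exp (p * c) * (p * exp (- r * cumL l t k - c) + (1 - p))"
      using exp_convex_ineq[OF less_imp_le[OF p(1)] p(2)] by simp
    finally show "exp (p * (- r * cumL l t k)) \<le> exp (p * c) * (p * exp (- r * cumL l t k - c) + (1 - p))" .
  qed simp
  also have "\<dots> = exp (p * c) * (p * ((\<Sum>k<K. exp (- r * cumL l t k)) / exp c / K) + (1 - p))"
  proof -
    have "(\<Sum>k<K. exp (p * c) * (p * exp (- r * cumL l t k - c) + (1 - p)))
       = (\<Sum>k<K. (exp (p * c) * p / exp c) * exp (- r * cumL l t k) + exp (p * c) * (1 - p))"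
      by (intro sum.cong) (auto simp: exp_diff field_simps)
    also have "\<dots> = (exp (p * c) * p / exp c) * (\<Sum>k<K. exp (- r * cumL l t k)) + K * (exp (p * c) * (1 - p))"
      by (simp add: sum.distrib sum_distrib_left)
    finally have "(\<Sum>k<K. exp (p * c) * (p * exp (- r * cumL l t k - c) + (1 - p)))
       = exp (p * c) * (p * ((\<Sum>k<K. exp (- r * cumL l t k)) / exp c) + K * (1 - p))"
      by (simp add: algebra_simps)
    then show ?thesis using assms(1) by (simp add: field_simps)
  qed
  also have "\<dots> = exp (p * c)"
  proof -
    have E: "(\<Sum>k<K. exp (- r * cumL l t k)) / exp c / K = 1"
    proof -
      have "Zs l K t r > 0" by (rule Zs_pos[OF assms(1)])
      then have "(\<Sum>k<K. exp (- r * cumL l t k)) > 0" by (simp add: Zs_def)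
      have "(\<Sum>k<K. exp (- r * cumL l t k)) = exp c * K" using ec assms(1) by (simp add: Zs_def field_simps)
      then show ?thesis using assms(1) by simp
    qed
    show ?thesis unfolding E by simp
  qed
  finally have "Zs l K t r' / K \<le> exp (p * c)" .
  then have "ln (Zs l K t r' / K) \<le> ln (exp (p * c))"
    using Zs_pos[OF assms(1)] assms(1) by (subst ln_le_cancel_iff) auto
  then have "ln (Zs l K t r' / K) \<le> p * c" by simp
  then have "- (1 / r') * (p * c) \<le> - (1 / r') * ln (Zs l K t r' / K)"
    using assms by (simp add: field_simps)
  moreover have "- (1 / r') * (p * c) = - (1 / r) * c" using assms by (simp add: p_def)
  ultimately show ?thesis unfolding Gf_def Mf_def c_def by simp
qed



lemma wt_nonneg: "wt l K eta t k \<ge> 0" by (simp add: wt_def ew_nonneg)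
lemma wt_sum: "K \<ge> 1 \<Longrightarrow> (\<Sum>k<K. wt l K eta t k) = 1" by (simp add: wt_def ew_sum)

lemma gap_nonneg_inf:
  assumes "K \<ge> 1" "t \<ge> 1" shows "mix_gap l K PInfty t \<ge> 0"
proof -
  obtain s where s: "t = Suc s" using assms(2) by (cases t) auto
  define m where "m = Lstar l K t - Lstar l K s"
  have "0 \<le> (\<Sum>k<K. wt l K PInfty t k * (l t k - m))"
  proof (intro sum_nonneg)
    fix k assume k: "k \<in> {..<K}"
    show "0 \<le> wt l K PInfty t k * (l t k - m)"
    proof (cases "cumL l s k = Lstar l K s")
      case True
      have "Lstar l K t \<le> cumL l t k" using k by (intro Lstar_le) auto
      then have "m \<le> l t k" using True by (simp add: m_def s cumL_Suc)
      then show ?thesis using wt_nonneg by simp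
    next
      case False
      then have "wt l K PInfty t k = 0" by (simp add: wt_def ew_def s Lstar_def)
      then show ?thesis by simp
    qed
  qed
  also have "\<dots> = hedge_loss l K PInfty t - m * (\<Sum>k<K. wt l K PInfty t k)"
    by (simp add: hedge_loss_def algebra_simps sum_subtractf sum_distrib_left)
  finally show ?thesis using wt_sum[OF assms(1)]
    by (simp add: mix_gap_def mix_loss_def m_def s)
qed

lemma gap_nonneg_fin:
  assumes "K \<ge> 1" "r > 0" shows "mix_gap l K (ereal r) t \<ge> 0"
proof -
  define h where "h = hedge_loss l K (ereal r) t"
  have "exp (\<Sum>k<K. wt l K (ereal r) t k * (- r * l t k)) \<le> (\<Sum>k<K. wt l K (ereal r) t k * exp (- r * l t k))"
    by (rule jensen_exp) (use wt_nonneg wt_sum[OF assms(1)] in auto)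
  moreover have "(\<Sum>k<K. wt l K (ereal r) t k * (- r * l t k)) = - r * h"
    by (simp add: h_def hedge_loss_def sum_distrib_left algebra_simps)
  ultimately have e: "exp (- r * h) \<le> (\<Sum>k<K. wt l K (ereal r) t k * exp (- r * l t k))" by simp
  then have "ln (exp (- r * h)) \<le> ln (\<Sum>k<K. wt l K (ereal r) t k * exp (- r * l t k))"
    by (subst ln_le_cancel_iff) (auto intro: less_le_trans[OF exp_gt_zero])
  then have "- r * h \<le> ln (\<Sum>k<K. wt l K (ereal r) t k * exp (- r * l t k))" by simp
  then have "- (1 / r) * ln (\<Sum>k<K. wt l K (ereal r) t k * exp (- r * l t k)) \<le> h"
    using assms(2) by (simp add: field_simps)
  then show ?thesis by (simp add: mix_gap_def mix_loss_def h_def)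
qed

lemma h_bounds:
  assumes "K \<ge> 1" "\<And>k. k < K \<Longrightarrow> 0 \<le> l t k \<and> l t k \<le> 1"
  shows "0 \<le> hedge_loss l K eta t" "hedge_loss l K eta t \<le> 1"
    "loss_var l K eta t \<le> hedge_loss l K eta t * (1 - hedge_loss l K eta t)"
  using wsum_bounds[of K "wt l K eta t" "l t", OF wt_nonneg wt_sum[OF assms(1)] assms(2)]
  by (auto simp: hedge_loss_def loss_var_def)



lemma sum_filter_Suc:
  "(\<Sum>s\<in>{s\<in>{1..Suc t}. P s}. f s) = (\<Sum>s\<in>{s\<in>{1..t}. P s}. f s) + (if P (Suc t) then f (Suc t) else 0)"
proof -
  have "{s\<in>{1..Suc t}. P s} = {s\<in>{1..t}. P s} \<union> (if P (Suc t) then {Suc t} else {})" by (auto simp: le_Suc_eq)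
  then show ?thesis by (auto simp: sum.union_disjoint)
qed

lemma ff_in_flop_Suc: "ff_in_flop l K phi alpha (Suc t) = fst (ff_state l K phi alpha t)"
  by (simp add: ff_in_flop_def)
lemma ff_eta_Suc: "ff_eta l K phi alpha (Suc t) = ff_rate K (ff_state l K phi alpha t)"
  by (simp add: ff_eta_def)

lemma ff_acc:
  "fst (snd (ff_state l K phi alpha t)) = (\<Sum>s\<in>{s\<in>{1..t}. \<not> ff_in_flop l K phi alpha s}. mix_gap l K (ff_eta l K phi alpha s) s)
 \<and> snd (snd (ff_state l K phi alpha t)) = (\<Sum>s\<in>{s\<in>{1..t}. ff_in_flop l K phi alpha s}. mix_gap l K (ff_eta l K phi alpha s) s)"
proof (induction t)
  case 0 then show ?case by simp
next
  case (Suc t)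
  obtain fl dF dL where st: "ff_state l K phi alpha t = (fl, dF, dL)" by (cases "ff_state l K phi alpha t") auto
  let ?d = "\<lambda>s. mix_gap l K (ff_eta l K phi alpha s) s"
  let ?P = "ff_in_flop l K phi alpha"
  have a: "(\<Sum>s\<in>{s\<in>{1..Suc t}. \<not> ?P s}. ?d s) = (\<Sum>s\<in>{s\<in>{1..t}. \<not> ?P s}. ?d s) + (if \<not> ?P (Suc t) then ?d (Suc t) else 0)"
    by (rule sum_filter_Suc)
  have b: "(\<Sum>s\<in>{s\<in>{1..Suc t}. ?P s}. ?d s) = (\<Sum>s\<in>{s\<in>{1..t}. ?P s}. ?d s) + (if ?P (Suc t) then ?d (Suc t) else 0)"
    by (rule sum_filter_Suc)
  have c: "?P (Suc t) = fl" "ff_eta l K phi alpha (Suc t) = ff_rate K (fl, dF, dL)"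
    by (simp_all add: ff_in_flop_Suc ff_eta_Suc st)
  show ?case unfolding a b using Suc st c
    by (simp add: Let_def)
qed



definition Xs :: "(nat \<Rightarrow> nat \<Rightarrow> real) \<Rightarrow> nat \<Rightarrow> real \<Rightarrow> real \<Rightarrow> nat \<Rightarrow> real" where
  "Xs l K phi alpha t = (\<Sum>s\<in>{s\<in>{1..t}. ff_in_flop l K phi alpha s}.
      mix_loss l K (ff_eta l K phi alpha s) s - (Lstar l K s - Lstar l K (s - 1)))"

definition Gc :: "(nat \<Rightarrow> nat \<Rightarrow> real) \<Rightarrow> nat \<Rightarrow> nat \<Rightarrow> real \<Rightarrow> real" where
  "Gc l K t dL = (if dL = 0 then 0 else Gf l K t (ln K / dL))"

lemma lnK_pos: "K \<ge> 2 \<Longrightarrow> ln (real K) > 0" by simp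

lemma Gc_nonneg: "K \<ge> 2 \<Longrightarrow> dL \<ge> 0 \<Longrightarrow> Gc l K t dL \<ge> 0"
  unfolding Gc_def using Gf_nonneg[of K "ln K / dL" l t] by auto

lemma Gc_le: "K \<ge> 2 \<Longrightarrow> dL \<ge> 0 \<Longrightarrow> Gc l K t dL \<le> dL"
  unfolding Gc_def using Gf_le[of K "ln K / dL" l t] by auto

lemma ff_inv:
  assumes K2: "K \<ge> 2" and phi1: "phi > 1" and alpha0: "alpha > 0"
  shows "case ff_state l K phi alpha t of (fl, dF, dL) \<Rightarrow> dL \<ge> 0 \<and>
     (\<exists>S. if fl then Xs l K phi alpha t \<le> S + Gc l K t dL \<and> S \<le> phi / (phi - 1) * dL \<and> S \<le> alpha * dF / (phi - 1)
          else dF \<le> phi / alpha * dL \<and> Xs l K phi alpha t \<le> S \<and> S \<le> phi / (phi - 1) * dL)"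
proof (induction t)
  case 0 then show ?case by (auto simp: Xs_def intro!: exI[of _ 0])
next
  case (Suc t)
  obtain fl dF dL where st: "ff_state l K phi alpha t = (fl, dF, dL)" by (cases "ff_state l K phi alpha t") auto
  from Suc st obtain S where dL0: "dL \<ge> 0" and IH: "if fl then Xs l K phi alpha t \<le> S + Gc l K t dL \<and> S \<le> phi / (phi - 1) * dL \<and> S \<le> alpha * dF / (phi - 1)
          else dF \<le> phi / alpha * dL \<and> Xs l K phi alpha t \<le> S \<and> S \<le> phi / (phi - 1) * dL" by auto
  define eta where "eta = ff_rate K (fl, dF, dL)"
  define d where "d = mix_gap l K eta (Suc t)"
  define dF' where "dF' = (if fl then dF else dF + d)"
  define dL' where "dL' = (if fl then dL + d else dL)"
  define fl' where "fl' = (if fl then \<not> (dL' > alpha * dF') else dF' > (phi / alpha) * dL')"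
  have st': "ff_state l K phi alpha (Suc t) = (fl', dF', dL')"
    by (simp add: st Let_def fl'_def dF'_def dL'_def d_def eta_def)
  have c: "ff_in_flop l K phi alpha (Suc t) = fl" "ff_eta l K phi alpha (Suc t) = eta"
    by (simp_all add: ff_in_flop_Suc ff_eta_Suc st eta_def)
  have XS: "Xs l K phi alpha (Suc t) = Xs l K phi alpha t + (if fl then mix_loss l K eta (Suc t) - (Lstar l K (Suc t) - Lstar l K t) else 0)"
    unfolding Xs_def by (subst sum_filter_Suc) (simp add: c)
  have K1: "K \<ge> 1" using K2 by simp
  have lnK: "ln (real K) > 0" using K2 by simp
  have p1: "phi - 1 > 0" using phi1 by simp
  show ?case
  proof (cases fl)
    case True
    have d0: "d \<ge> 0"
    proof (cases "dL = 0")
      case True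
      then have "eta = PInfty" using \<open>fl\<close> by (simp add: eta_def ff_rate_def)
      then show ?thesis unfolding d_def using gap_nonneg_inf[OF K1] by simp
    next
      case False
      then have "eta = ereal (ln K / dL)" using \<open>fl\<close> by (simp add: eta_def ff_rate_def)
      then show ?thesis unfolding d_def using gap_nonneg_fin[OF K1, of "ln K / dL"] False dL0 lnK by simp
    qed
    have dL'eq: "dL' = dL + d" "dF' = dF" using True by (simp_all add: dL'_def dF'_def)
    have dLle: "dL \<le> dL'" "dL' \<ge> 0" using d0 dL0 dL'eq by auto
    from IH True have I1: "Xs l K phi alpha t \<le> S + Gc l K t dL" and I2: "S \<le> phi / (phi - 1) * dL"
      and I3: "S \<le> alpha * dF / (phi - 1)" by auto
    have XA: "Xs l K phi alpha (Suc t) \<le> S + Gc l K (Suc t) dL'" and XB: "Xs l K phi alpha (Suc t) \<le> S + dL'"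
    proof -
      have "Xs l K phi alpha (Suc t) \<le> S + Gc l K (Suc t) dL' \<and> Xs l K phi alpha (Suc t) \<le> S + dL'"
      proof (cases "dL = 0")
        case True
        then have "eta = PInfty" using \<open>fl\<close> by (simp add: eta_def ff_rate_def)
        then have "Xs l K phi alpha (Suc t) = Xs l K phi alpha t" using XS by (simp add: mix_loss_def)
        moreover have "Gc l K t dL = 0" using True by (simp add: Gc_def)
        ultimately show ?thesis using I1 Gc_nonneg[OF K2 dLle(2), of l "Suc t"] dLle by auto
      next
        case False
        define r where "r = ln K / dL"
        have r0: "r > 0" using False dL0 lnK by (simp add: r_def)
        then have "eta = ereal r" using \<open>fl\<close> False by (simp add: eta_def ff_rate_def r_def)
        then have "Xs l K phi alpha (Suc t) = Xs l K phi alpha t + (Gf l K (Suc t) r - Gf l K t r)"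
          using XS \<open>fl\<close> mix_eq[OF K1 r0, of "Suc t" l] by (simp add: Gf_def)
        moreover have "Gc l K t dL = Gf l K t r" using False by (simp add: Gc_def r_def)
        ultimately have X1: "Xs l K phi alpha (Suc t) \<le> S + Gf l K (Suc t) r" using I1 by simp
        have "Gf l K (Suc t) r \<le> ln K / r" by (rule Gf_le[OF K1 r0])
        also have "ln K / r = dL" using False lnK by (simp add: r_def)
        finally have X2: "Gf l K (Suc t) r \<le> dL'" using dLle by simp
        have dL'0: "dL' > 0" using False dL0 dLle by simp
        have "Gf l K (Suc t) r \<le> Gf l K (Suc t) (ln K / dL')"
        proof (rule Gf_mono[OF K1])
          show "0 < ln K / dL'" using dL'0 lnK by simp
          show "ln K / dL' \<le> r" unfolding r_def using dLle lnK False dL0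
            by (intro divide_left_mono) auto
        qed
        then show ?thesis using X1 X2 dL'0 by (simp add: Gc_def)
      qed
      then show "Xs l K phi alpha (Suc t) \<le> S + Gc l K (Suc t) dL'" "Xs l K phi alpha (Suc t) \<le> S + dL'" by auto
    qed
    show ?thesis
    proof (cases "dL' > alpha * dF'")
      case sw: True
      then have fl': "\<not> fl'" using \<open>fl\<close> by (simp add: fl'_def)
      have "dF' < dL' / alpha" using sw alpha0 by (simp add: field_simps)
      also have "dL' / alpha \<le> phi / alpha * dL'"
      proof -
        have "dL' * 1 \<le> dL' * phi" using dLle phi1 by (intro mult_left_mono) auto
        then show ?thesis using alpha0 by (simp add: field_simps)
      qed
      finally have A: "dF' \<le> phi / alpha * dL'" by simp
      have "S \<le> dL' / (phi - 1)"
      proof -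
        have "alpha * dF / (phi - 1) \<le> dL' / (phi - 1)" using sw dL'eq p1
          by (intro divide_right_mono) auto
        then show ?thesis using I3 by simp
      qed
      then have B: "S + dL' \<le> phi / (phi - 1) * dL'" using p1 by (simp add: field_simps)
      show ?thesis unfolding st' using fl' A B XB dLle by (auto intro!: exI[of _ "S + dL'"])
    next
      case stay: False
      then have fl': "fl'" using \<open>fl\<close> by (simp add: fl'_def)
      have "phi / (phi - 1) * dL \<le> phi / (phi - 1) * dL'" using dLle phi1 p1
        by (intro mult_left_mono) auto
      then show ?thesis unfolding st' using fl' XA I2 I3 dLle dL'eq by (auto intro!: exI[of _ S])
    qed
  next
    case False
    have eta: "eta = PInfty" using False by (simp add: eta_def ff_rate_def)
    have XS': "Xs l K phi alpha (Suc t) = Xs l K phi alpha t" using XS False by simp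
    have dL'eq: "dL' = dL" "dF' = dF + d" using False by (simp_all add: dL'_def dF'_def)
    from IH False have I1: "Xs l K phi alpha t \<le> S" and I2: "S \<le> phi / (phi - 1) * dL" by auto
    show ?thesis
    proof (cases "dF' > (phi / alpha) * dL'")
      case sw: True
      then have fl': "fl'" using False by (simp add: fl'_def)
      have "dL < alpha * dF' / phi" using sw dL'eq alpha0 phi1 by (simp add: field_simps)
      then have "phi / (phi - 1) * dL \<le> phi / (phi - 1) * (alpha * dF' / phi)" using phi1 p1
        by (intro mult_left_mono) auto
      also have "\<dots> = alpha * dF' / (phi - 1)" using phi1 by simp
      finally have A: "S \<le> alpha * dF' / (phi - 1)" using I2 by simp
      have "Xs l K phi alpha (Suc t) \<le> S + Gc l K (Suc t) dL'"
        using XS' I1 Gc_nonneg[OF K2, of dL' l "Suc t"] dL0 dL'eq by simp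
      then show ?thesis unfolding st' using fl' A I2 dL'eq dL0 by (auto intro!: exI[of _ S])
    next
      case stay: False
      then have fl': "\<not> fl'" using False by (simp add: fl'_def)
      show ?thesis unfolding st' using fl' stay XS' I1 I2 dL'eq dL0 by (auto intro!: exI[of _ S])
    qed
  qed
qed



lemma numQ:
  fixes N a c :: real
  assumes "N \<ge> 2" "0 \<le> c" "c \<le> 1"
  shows "(a - c) - (a - c)\<^sup>2 / (N - 1) \<le> a * (N - a) / N"
proof -
  have n: "N - 1 > 0" "N > 0" using assms by auto
  have e: "N * (N - 1) * (a * (N - a) / N - ((a - c) - (a - c)\<^sup>2 / (N - 1))) = (a - N * c)\<^sup>2 + N * c * (N - 1) * (1 - c)"
    using n by (simp add: field_simps power2_eq_square)
  have "0 \<le> (a - N * c)\<^sup>2 + N * c * (N - 1) * (1 - c)" using assms n by (intro add_nonneg_nonneg) auto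
  then have "0 \<le> N * (N - 1) * (a * (N - a) / N - ((a - c) - (a - c)\<^sup>2 / (N - 1)))" using e by simp
  then have "0 \<le> a * (N - a) / N - ((a - c) - (a - c)\<^sup>2 / (N - 1))"
  proof -
    have pos: "N * (N - 1) > 0" using n by simp
    show ?thesis using pos \<open>0 \<le> N * (N - 1) * _\<close> by (auto simp: zero_le_mult_iff)
  qed
  then show ?thesis by simp
qed

lemma numL:
  fixes N a x y :: real
  assumes "N \<ge> 2" "0 \<le> y" "y \<le> 1" "y \<le> a" "x \<ge> 0" "x \<ge> a - 1"
  shows "x - x\<^sup>2 / (N - 1) \<le> a * (N - a) / N + max 0 (x - a + y)"
proof (cases "x \<ge> a - y")
  case True
  have n: "N - 1 > 0" using assms by auto
  have "x - x\<^sup>2 / (N - 1) - ((a - y) - (a - y)\<^sup>2 / (N - 1)) = (x - (a - y)) * (1 - (x + (a - y)) / (N - 1))"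
  proof -
    define n where "n = N - 1"
    have n0: "n \<noteq> 0" using n by (simp add: n_def)
    have "x - x\<^sup>2 / n - ((a - y) - (a - y)\<^sup>2 / n) = (x - (a - y)) * (1 - (x + (a - y)) / n)"
      using n0 by (simp add: field_simps power2_eq_square)
    then show ?thesis by (simp add: n_def)
  qed
  also have "\<dots> \<le> (x - (a - y)) * 1"
    using True assms n by (intro mult_left_mono) auto
  finally have "x - x\<^sup>2 / (N - 1) \<le> ((a - y) - (a - y)\<^sup>2 / (N - 1)) + (x - a + y)" by simp
  also have "\<dots> \<le> a * (N - a) / N + (x - a + y)" using numQ[OF assms(1-3), of a] by simp
  finally show ?thesis by simp
next
  case False
  have "x - x\<^sup>2 / (N - 1) = (a - (a - x)) - (a - (a - x))\<^sup>2 / (N - 1)" by simp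
  also have "\<dots> \<le> a * (N - a) / N" using False assms by (intro numQ) auto
  finally show ?thesis by simp
qed



lemma cumL_nonneg: assumes "\<And>s. s \<in> {1..t} \<Longrightarrow> 0 \<le> l s k" shows "cumL l t k \<ge> 0"
  unfolding cumL_def using assms by (intro sum_nonneg) auto

lemma Lstar_facts:
  assumes K1: "K \<ge> 1" and lb: "\<And>t k. t \<in> {1..T} \<Longrightarrow> k < K \<Longrightarrow> 0 \<le> l t k \<and> l t k \<le> 1"
  shows "\<And>t. t \<le> T \<Longrightarrow> Lstar l K t \<ge> 0"
    and "\<And>t. 1 \<le> t \<Longrightarrow> t \<le> T \<Longrightarrow> 0 \<le> Lstar l K t - Lstar l K (t - 1) \<and> Lstar l K t - Lstar l K (t - 1) \<le> 1"
    and "Lstar l K T \<le> real T"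
proof -
  fix t assume t: "t \<le> T"
  obtain k where k: "k < K" "Lstar l K t = cumL l t k" using Lstar_ex[OF K1] by blast
  show "Lstar l K t \<ge> 0" unfolding k(2) using lb t k(1) by (intro cumL_nonneg) auto
next
  fix t assume t: "1 \<le> t" "t \<le> T"
  obtain s where s: "t = Suc s" using t by (cases t) auto
  obtain k where k: "k < K" "Lstar l K t = cumL l t k" using Lstar_ex[OF K1] by blast
  obtain j where j: "j < K" "Lstar l K s = cumL l s j" using Lstar_ex[OF K1] by blast
  have "Lstar l K s \<le> cumL l s k" using k(1) by (rule Lstar_le)
  then have A: "Lstar l K s \<le> Lstar l K t" using k lb[of t k] t by (simp add: s cumL_Suc)
  have "Lstar l K t \<le> cumL l t j" using j(1) by (rule Lstar_le)
  then have B: "Lstar l K t \<le> Lstar l K s + 1" using j lb[of t j] t by (simp add: s cumL_Suc)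
  show "0 \<le> Lstar l K t - Lstar l K (t - 1) \<and> Lstar l K t - Lstar l K (t - 1) \<le> 1" using A B s by simp
next
  have "Lstar l K T \<le> cumL l T 0" using K1 by (intro Lstar_le) auto
  also have "\<dots> \<le> (\<Sum>s\<in>{1..T}. 1)" unfolding cumL_def using lb K1 by (intro sum_mono) auto
  finally show "Lstar l K T \<le> real T" by simp
qed

lemma Lstar_mono:
  assumes K1: "K \<ge> 1" and lb: "\<And>t k. t \<in> {1..T} \<Longrightarrow> k < K \<Longrightarrow> 0 \<le> l t k \<and> l t k \<le> 1"
  shows "t \<le> t' \<Longrightarrow> t' \<le> T \<Longrightarrow> Lstar l K t \<le> Lstar l K t'"
proof (induction t')
  case 0 then show ?case by simp
next
  case (Suc t')
  show ?case
  proof (cases "t = Suc t'")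
    case False
    then have "Lstar l K t \<le> Lstar l K t'" using Suc by auto
    also have "\<dots> \<le> Lstar l K (Suc t')" using Lstar_facts(2)[OF K1 lb, of "Suc t'"] Suc by force
    finally show ?thesis .
  qed simp
qed

lemma Lstar_tele: "(\<Sum>s\<in>{1..t}. Lstar l K s - Lstar l K (s - 1)) = Lstar l K t - Lstar l K 0"
proof (induction t)
  case (Suc t)
  have "{1..Suc t} = insert (Suc t) {1..t}" by auto
  then show ?case using Suc by simp
qed simp



lemma K1_state: "ff_state l 1 phi alpha t = (False, 0, 0)"
proof (induction t)
  case (Suc t)
  have s1: "{..<Suc 0} = {0}" by auto
  have c: "\<And>P. P 0 \<Longrightarrow> {j. j = (0::nat) \<and> P j} = {0}" by auto
  have w: "wt l 1 PInfty (Suc t) 0 = 1" by (simp add: wt_def ew_def s1 c)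
  have L: "\<And>s. Lstar l 1 s = cumL l s 0" by (simp add: Lstar_def s1)
  have "mix_gap l 1 PInfty (Suc t) = 0"
    unfolding mix_gap_def hedge_loss_def mix_loss_def using w L by (simp add: cumL_Suc s1)
  then have "mix_gap l 1 (ff_rate 1 (False, 0, 0)) (Suc t) = 0" by (simp add: ff_rate_def)
  then show ?case using Suc by (simp add: Let_def)
qed simp



lemma flop_gap:
  assumes K2: "K \<ge> 2" and phi1: "phi > 1" and alpha0: "alpha > 0"
    and s: "s \<ge> 1" "ff_in_flop l K phi alpha s"
  shows "mix_gap l K (ff_eta l K phi alpha s) s \<ge> 0"
proof -
  obtain fl dF dL where st: "ff_state l K phi alpha (s - 1) = (fl, dF, dL)" by (cases "ff_state l K phi alpha (s - 1)") auto
  have dL0: "dL \<ge> 0" using ff_inv[OF K2 phi1 alpha0, of l "s - 1"] st by simp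
  have fl: fl using s st by (simp add: ff_in_flop_def)
  have K1: "K \<ge> 1" using K2 by simp
  show ?thesis
  proof (cases "dL = 0")
    case True
    then have "ff_eta l K phi alpha s = PInfty" using st fl by (simp add: ff_eta_def ff_rate_def)
    then show ?thesis using gap_nonneg_inf[OF K1 s(1)] by simp
  next
    case False
    then have "ff_eta l K phi alpha s = ereal (ln K / dL)" using st fl by (simp add: ff_eta_def ff_rate_def)
    moreover have "ln K / dL > 0" using False dL0 K2 by simp
    ultimately show ?thesis using gap_nonneg_fin[OF K1] by simp
  qed
qed

lemma flip_eta:
  assumes "\<not> ff_in_flop l K phi alpha s"
  shows "ff_eta l K phi alpha s = PInfty"
proof -
  obtain fl dF dL where st: "ff_state l K phi alpha (s - 1) = (fl, dF, dL)" by (cases "ff_state l K phi alpha (s - 1)") auto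
  then show ?thesis using assms by (simp add: ff_in_flop_def ff_eta_def ff_rate_def)
qed

lemma Xs_bound:
  assumes K2: "K \<ge> 2" and phi1: "phi > 1" and alpha0: "alpha > 0"
  shows "Xs l K phi alpha T \<le> (phi / (phi - 1) + 1) * snd (snd (ff_state l K phi alpha T))"
proof -
  obtain fl dF dL where st: "ff_state l K phi alpha T = (fl, dF, dL)" by (cases "ff_state l K phi alpha T") auto
  have I: "dL \<ge> 0 \<and> (\<exists>S. if fl then Xs l K phi alpha T \<le> S + Gc l K T dL \<and> S \<le> phi / (phi - 1) * dL \<and> S \<le> alpha * dF / (phi - 1)
          else dF \<le> phi / alpha * dL \<and> Xs l K phi alpha T \<le> S \<and> S \<le> phi / (phi - 1) * dL)"
    using ff_inv[OF K2 phi1 alpha0, of l T] st by simp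
  then obtain S where dL0: "dL \<ge> 0" and S: "if fl then Xs l K phi alpha T \<le> S + Gc l K T dL \<and> S \<le> phi / (phi - 1) * dL \<and> S \<le> alpha * dF / (phi - 1)
          else dF \<le> phi / alpha * dL \<and> Xs l K phi alpha T \<le> S \<and> S \<le> phi / (phi - 1) * dL" by blast
  have "Gc l K T dL \<le> dL" using Gc_le[OF K2 dL0] .
  then show ?thesis using S dL0 st by (cases fl) (auto simp: algebra_simps)
qed



theorem lemma13:
  fixes l :: "nat \<Rightarrow> nat \<Rightarrow> real" and K T :: nat and phi alpha :: real
  assumes "K \<ge> 1" and "T \<ge> 1"
    and "\<And>t k. t \<in> {1..T} \<Longrightarrow> k < K \<Longrightarrow> 0 \<le> l t k \<and> l t k \<le> 1"
    and "phi > 1" and "alpha > 0"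
    and "ff_loss l K phi alpha T \<ge> Lstar l K T"
  shows "ff_Vflop l K phi alpha T
    \<le> Lstar l K T * (real T - Lstar l K T) / real T
       + (phi / (phi - 1) + phi / alpha + 2) * ff_Dflop l K phi alpha T + phi / alpha"
proof -
  note K1 = assms(1) and T1 = assms(2) and lb = assms(3) and phi1 = assms(4) and alpha0 = assms(5)
  define a where "a = Lstar l K T"
  have a0: "a \<ge> 0" unfolding a_def using Lstar_facts(1)[OF K1 lb] by simp
  have aT: "a \<le> real T" unfolding a_def using Lstar_facts(3)[OF K1 lb] .
  have fa0: "a * (real T - a) / real T \<ge> 0" using a0 aT by simp
  define C where "C = phi / (phi - 1) + phi / alpha + 2"
  have C0: "C \<ge> 0" using phi1 alpha0 by (simp add: C_def)
  show ?thesis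
  proof (cases "K = 1")
    case True
    have nf: "\<And>s. \<not> ff_in_flop l K phi alpha s" using True K1_state by (simp add: ff_in_flop_def)
    have "ff_Vflop l K phi alpha T = 0" "ff_Dflop l K phi alpha T = 0"
      by (simp_all add: ff_Vflop_def ff_Dflop_def nf)
    then show ?thesis using fa0 alpha0 phi1 by (simp add: a_def)
  next
    case False
    then have K2: "K \<ge> 2" using K1 by simp
    let ?fl = "ff_in_flop l K phi alpha"
    define h where "h s = hedge_loss l K (ff_eta l K phi alpha s) s" for s
    define d where "d s = mix_gap l K (ff_eta l K phi alpha s) s" for s
    define m where "m s = mix_loss l K (ff_eta l K phi alpha s) s" for s
    define y where "y s = Lstar l K s - Lstar l K (s - 1)" for s
    define v where "v s = loss_var l K (ff_eta l K phi alpha s) s" for s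
    define F where "F = {s\<in>{1..T}. \<not> ?fl s}"
    define P where "P = {s\<in>{1..T}. ?fl s}"
    define D where "D = ff_Dflop l K phi alpha T"
    have D_eq: "D = sum d P" by (simp add: D_def ff_Dflop_def d_def P_def)
    have finF: "finite F" "finite P" by (auto simp: F_def P_def)
    have "1 \<in> F" using T1 by (simp add: F_def ff_in_flop_def)
    then have Fne: "F \<noteq> {}" by auto
    define t0 where "t0 = Max F"
    have t0F: "t0 \<in> F" unfolding t0_def using finF Fne by (intro Max_in) auto
    have t0max: "\<And>s. s \<in> F \<Longrightarrow> s \<le> t0" unfolding t0_def using finF by auto
    have t0T: "1 \<le> t0" "t0 \<le> T" "\<not> ?fl t0" using t0F by (auto simp: F_def)
    have dP0: "\<And>s. s \<in> P \<Longrightarrow> d s \<ge> 0" unfolding d_def P_def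
      using flop_gap[OF K2 phi1 alpha0] by auto
    have D0: "D \<ge> 0" unfolding D_eq using dP0 by (intro sum_nonneg) auto
    have Lst0: "Lstar l K 0 = 0" using Lstar_0[OF K1] .
    have R_eq: "ff_loss l K phi alpha T - a = (\<Sum>s\<in>{1..T}. h s - y s)"
      using Lstar_tele[of l K T] Lst0 by (simp add: ff_loss_def a_def h_def y_def sum_subtractf)
    have part: "{1..T} = F \<union> P" "F \<inter> P = {}" by (auto simp: F_def P_def)
    have sF: "(\<Sum>s\<in>F. h s - y s) = sum d F"
    proof (intro sum.cong refl)
      fix s assume "s \<in> F"
      then have "ff_eta l K phi alpha s = PInfty" by (intro flip_eta) (simp add: F_def)
      then show "h s - y s = d s" by (simp add: h_def y_def d_def mix_gap_def mix_loss_def)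
    qed
    have sP: "(\<Sum>s\<in>P. h s - y s) = D + Xs l K phi alpha T"
    proof -
      have "(\<Sum>s\<in>P. h s - y s) = (\<Sum>s\<in>P. d s + (m s - y s))"
        by (intro sum.cong) (auto simp: h_def d_def m_def mix_gap_def)
      also have "\<dots> = D + Xs l K phi alpha T"
        by (simp add: sum.distrib D_eq Xs_def m_def y_def P_def)
      finally show ?thesis .
    qed
    have R_eq2: "ff_loss l K phi alpha T - a = sum d F + D + Xs l K phi alpha T"
      unfolding R_eq part(1) using sum.union_disjoint[OF finF part(2), of "\<lambda>s. h s - y s"] sF sP by simp
    have sF2: "sum d F = sum d (F - {t0}) + d t0" using sum.remove[OF finF(1) t0F, of d] by simp
    have Fm: "F - {t0} = {s\<in>{1..t0 - 1}. \<not> ?fl s}"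
    proof (intro set_eqI iffI)
      fix s assume s: "s \<in> F - {t0}"
      then have "s \<le> t0" "s \<noteq> t0" using t0max by auto
      then show "s \<in> {s\<in>{1..t0 - 1}. \<not> ?fl s}" using s by (auto simp: F_def)
    next
      fix s assume "s \<in> {s\<in>{1..t0 - 1}. \<not> ?fl s}"
      then show "s \<in> F - {t0}" using t0T by (auto simp: F_def)
    qed
    obtain fl dF dL where st: "ff_state l K phi alpha (t0 - 1) = (fl, dF, dL)"
      by (cases "ff_state l K phi alpha (t0 - 1)") auto
    have flF: "\<not> fl" using t0T st by (simp add: ff_in_flop_def)
    have accs: "dF = sum d (F - {t0})" "dL = (\<Sum>s\<in>{s\<in>{1..t0 - 1}. ?fl s}. d s)"
      using ff_acc[of l K phi alpha "t0 - 1"] st by (simp_all add: Fm d_def)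
    have dFle: "dF \<le> phi / alpha * dL" using ff_inv[OF K2 phi1 alpha0, of l "t0 - 1"] st flF by simp
    have "dL \<le> D" unfolding accs D_eq using t0T dP0 finF
      by (intro sum_mono2) (auto simp: P_def)
    then have "phi / alpha * dL \<le> phi / alpha * D" using phi1 alpha0
      by (intro mult_left_mono) auto
    then have "dF \<le> phi / alpha * D" using dFle by linarith
    moreover have "Xs l K phi alpha T \<le> (phi / (phi - 1) + 1) * D"
      using Xs_bound[OF K2 phi1 alpha0, of l T] ff_acc[of l K phi alpha T]
      by (simp add: D_def ff_Dflop_def)
    ultimately have key: "ff_loss l K phi alpha T - a - d t0 \<le> C * D"
      using R_eq2 sF2 accs by (simp add: C_def algebra_simps)
    have keym: "max 0 (ff_loss l K phi alpha T - a - d t0) \<le> C * D" using key C0 D0 by simp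
    define S where "S = {1..T} - {t0}"
    have hb: "\<And>s. s \<in> {1..T} \<Longrightarrow> 0 \<le> h s \<and> h s \<le> 1 \<and> v s \<le> h s * (1 - h s)"
      unfolding h_def v_def using h_bounds[OF K1] lb by blast
    have "ff_Vflop l K phi alpha T = sum v P" by (simp add: ff_Vflop_def v_def P_def)
    also have "\<dots> \<le> (\<Sum>s\<in>P. h s * (1 - h s))" using hb by (intro sum_mono) (auto simp: P_def)
    also have "\<dots> \<le> (\<Sum>s\<in>S. h s * (1 - h s))"
      using hb t0T by (intro sum_mono2) (auto simp: S_def P_def)
    finally have V1: "ff_Vflop l K phi alpha T \<le> (\<Sum>s\<in>S. h s * (1 - h s))" .
    have "(\<Sum>s\<in>S. h s * (1 - h s)) \<le> a * (real T - a) / real T + C * D"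
    proof (cases "T = 1")
      case True
      then have "S = {}" using t0T by (auto simp: S_def)
      then show ?thesis using fa0 C0 D0 by simp
    next
      case False
      then have T2: "real T \<ge> 2" using T1 by simp
      define x where "x = sum h S"
      have cS: "card S = T - 1" using t0T by (simp add: S_def)
      have "x\<^sup>2 \<le> (\<Sum>s\<in>S. (h s)\<^sup>2) * card S" unfolding x_def by (rule sum_squared_le_sum_of_squares)
      then have sq: "x\<^sup>2 / (real T - 1) \<le> (\<Sum>s\<in>S. (h s)\<^sup>2)" using cS T2 T1
        by (simp add: of_nat_diff field_simps)
      have "(\<Sum>s\<in>S. h s * (1 - h s)) = x - (\<Sum>s\<in>S. (h s)\<^sup>2)"
        by (simp add: x_def algebra_simps sum_subtractf power2_eq_square)
      also have "\<dots> \<le> x - x\<^sup>2 / (real T - 1)" using sq by simp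
      also have "\<dots> \<le> a * (real T - a) / real T + max 0 (x - a + y t0)"
      proof (rule numL[OF T2])
        show "0 \<le> y t0" "y t0 \<le> 1" using Lstar_facts(2)[OF K1 lb t0T(1) t0T(2)] by (auto simp: y_def)
        have "t0 - 1 \<le> T" using t0T by simp
        from Lstar_facts(1)[OF K1 lb this] have "Lstar l K (t0 - 1) \<ge> 0" .
        moreover have "Lstar l K t0 \<le> a" unfolding a_def using Lstar_mono[OF K1 lb t0T(2) order_refl] by simp
        ultimately show "y t0 \<le> a" by (simp add: y_def)
        have xe: "x = ff_loss l K phi alpha T - h t0"
          using sum.remove[of "{1..T}" t0 h] t0T by (simp add: x_def S_def ff_loss_def h_def)
        show "x \<ge> 0" unfolding x_def S_def using hb by (intro sum_nonneg) auto
        show "x \<ge> a - 1" using xe hb[of t0] t0T assms(6) by (simp add: a_def)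
      qed
      also have "x - a + y t0 = ff_loss l K phi alpha T - a - d t0"
        using sum.remove[of "{1..T}" t0 h] t0T
        by (simp add: x_def S_def ff_loss_def h_def d_def y_def mix_gap_def mix_loss_def flip_eta)
      finally show ?thesis using key mult_nonneg_nonneg[OF C0 D0] by (simp add: max_def split: if_splits)
    qed
    moreover have "phi / alpha > 0" using alpha0 phi1 by simp
    ultimately show ?thesis using V1 unfolding a_def C_def D_def by linarith
  qed
qed


end
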